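(* Let $t\colon \mathbb{N}_0 \to \{\pm 1\}$ be the Thue-Morse sequence. For every $s \in \mathbb{N}$ there exists $c = c(s) > 0$ such that $\|t\|_{U^s[N]} = O(N^{-c})$ as $N \to \infty$.
   Context: The Thue-Morse sequence is $t(n) = (-1)^{s_2(n)}$, where $s_2(n)$ is the sum of the binary digits of $n$; equivalently $t(0)=1$, $t(2n)=t(n)$, $t(2n+1)=-t(n)$. For $N \in \mathbb{N}$ write $[N] = \{0,1,\dots,N-1\}$. For $s\in\mathbb{N}$ and $f\colon [N]\to\mathbb{R}$, the Gowers uniformity norm is defined by $\|f\|_{U^s[N]}^{2^s} = \mathbb{E}_{n,\mathbf h} \prod_{\omega\in\{0,1\}^s} f(n+\omega\cdot \mathbf h)$, where $\omega\cdot\mathbf h = \sum_{i=1}^s \omega_i h_i$ and the expectation is over all $n\in\mathbb{Z}$, $\mathbf h\in\mathbb{Z}^s$ such that the cube $\{n+\omega\cdot\mathbf h : \omega\in\{0,1\}^s\}$ is contained in $[N]$. Here $\|t\|_{U^s[N]}$ means the norm of the restriction of $t$ to $[N]$. *)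

theory Defs
  imports "HOL-Analysis.Analysis" "HOL-Library.Landau_Symbols"
begin

fun thue_morse :: "nat \<Rightarrow> real" where
  "thue_morse n = (if n = 0 then 1
                   else if even n then thue_morse (n div 2) else - thue_morse (n div 2))"

definition cube_dot :: "bool list \<Rightarrow> int list \<Rightarrow> int" where
  "cube_dot \<omega> hs = (\<Sum>i<length hs. if \<omega> ! i then hs ! i else 0)"

definition cube_vertices :: "nat \<Rightarrow> bool list set" where
  "cube_vertices s = {\<omega>. length \<omega> = s}"

definition gowers_cubes :: "nat \<Rightarrow> nat \<Rightarrow> (int \<times> int list) set" where
  "gowers_cubes s N = {(n, hs). length hs = s \<and>
      (\<forall>\<omega>\<in>cube_vertices s. 0 \<le> n + cube_dot \<omega> hs \<and> n + cube_dot \<omega> hs < int N)}"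

definition gowers_power :: "nat \<Rightarrow> nat \<Rightarrow> (nat \<Rightarrow> real) \<Rightarrow> real" where
  "gowers_power s N f =
     (\<Sum>(n, hs)\<in>gowers_cubes s N.
        \<Prod>\<omega>\<in>cube_vertices s. f (nat (n + cube_dot \<omega> hs))) / real (card (gowers_cubes s N))"

definition gowers_norm :: "nat \<Rightarrow> nat \<Rightarrow> (nat \<Rightarrow> real) \<Rightarrow> real" where
  "gowers_norm s N f = root (2 ^ s) (gowers_power s N f)"

end

theory Submission
  imports Defs
begin

declare thue_morse.simps [simp del]

lemma tm_0 [simp]: "thue_morse 0 = 1"
  by (simp add: thue_morse.simps)

lemma tm_even [simp]: "thue_morse (2*n) = thue_morse n"
  by (cases "n = 0") (simp_all add: thue_morse.simps[of "2*n"])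

lemma tm_odd [simp]: "thue_morse (2*n+1) = - thue_morse n"
  using thue_morse.simps[of "2*n+1"] by simp

lemma tm_pm: "thue_morse n = 1 \<or> thue_morse n = -1"
proof (induction n rule: less_induct)
  case (less n)
  show ?case
  proof (cases "n = 0")
    case False
    then have "n div 2 < n" by simp
    with less show ?thesis by (auto simp add: thue_morse.simps[of n])
  qed simp
qed

lemma tm_sq: "thue_morse n * thue_morse n = 1"
  using tm_pm[of n] by auto

lemma tm_abs [simp]: "\<bar>thue_morse n\<bar> = 1"
  using tm_pm[of n] by auto

lemma tm_mult: "b < 2^j \<Longrightarrow> thue_morse (2^j * a + b) = thue_morse a * thue_morse b"
proof (induction j arbitrary: a b)
  case 0 then show ?case by simp
next
  case (Suc j)
  have b: "b = 2 * (b div 2) + b mod 2" by simp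
  have lt: "b div 2 < 2^j" using Suc.prems by simp
  have e: "2 ^ Suc j * a + b = 2 * (2^j * a + b div 2) + b mod 2" by simp
  show ?case
  proof (cases "even b")
    case True
    then have "b mod 2 = 0" by simp
    then show ?thesis using Suc.IH[OF lt] e b by (metis add.right_neutral tm_even)
  next
    case False
    then have "b mod 2 = 1" by presburger
    then show ?thesis using Suc.IH[OF lt] e b by (metis mult_minus_right tm_odd)
  qed
qed

lemma tm_pow2: "thue_morse (2^a) = -1"
proof (induction a)
  case 0 then show ?case using tm_odd[of 0] by simp
next
  case (Suc a) then show ?case by (metis power_Suc tm_even)
qed

definition dlt :: "(nat \<Rightarrow> real) \<Rightarrow> nat \<Rightarrow> real" where
  "dlt g y = g y * g (y + 1)"

lemma dlt_pow2:
  assumes "\<And>y. g y * g y = 1"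
  shows "(dlt ^^ (2^a)) g y = g y * g (y + 2^a)"
  using assms
proof (induction a arbitrary: g y)
  case 0 then show ?case by (simp add: dlt_def)
next
  case (Suc a)
  define h where "h = (dlt ^^ (2^a)) g"
  have h: "h = (\<lambda>y. g y * g (y + 2^a))" unfolding h_def using Suc by auto
  have hsq: "h y * h y = 1" for y
  proof -
    have "h y * h y = (g y * g y) * (g (y+2^a) * g (y+2^a))" by (simp add: h algebra_simps)
    then show ?thesis using Suc.prems by simp
  qed
  have "(dlt ^^ (2^Suc a)) g y = (dlt ^^ (2^a)) h y"
    by (simp add: h_def funpow_add mult_2)
  also have "\<dots> = h y * h (y + 2^a)" using Suc.IH[of h] hsq by blast
  also have "\<dots> = g y * g (y + 2 ^ Suc a) * (g (y+2^a) * g (y+2^a))"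
    by (simp add: h algebra_simps mult_2)
  also have "\<dots> = g y * g (y + 2 ^ Suc a)" using Suc.prems by simp
  finally show ?case .
qed

lemma dlt_one: "(dlt ^^ j) (\<lambda>_. 1) = (\<lambda>_. 1)"
  by (induction j) (auto simp: dlt_def)

lemma dlt_tm_sq: "(dlt ^^ j) thue_morse y * (dlt ^^ j) thue_morse y = 1"
proof (induction j arbitrary: y)
  case 0 then show ?case by (simp add: tm_sq)
next
  case (Suc j)
  have "(dlt ^^ Suc j) thue_morse y * (dlt ^^ Suc j) thue_morse y =
    ((dlt ^^ j) thue_morse y * (dlt ^^ j) thue_morse y) * ((dlt ^^ j) thue_morse (y+1) * (dlt ^^ j) thue_morse (y+1))"
    by (simp add: dlt_def algebra_simps)
  then show ?case using Suc by simp
qed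

lemma dlt_tm_exists: "\<exists>y. (dlt ^^ s) thue_morse y = -1"
proof (rule ccontr)
  assume nex: "\<not> ?thesis"
  have "\<forall>y. (dlt ^^ s) thue_morse y = 1"
  proof
    fix y
    have "(dlt ^^ s) thue_morse y * (dlt ^^ s) thue_morse y = 1" by (rule dlt_tm_sq)
    then have "(dlt ^^ s) thue_morse y = 1 \<or> (dlt ^^ s) thue_morse y = -1"
      by (metis square_eq_1_iff power2_eq_square)
    then show "(dlt ^^ s) thue_morse y = 1" using nex by auto
  qed
  then have 1: "(dlt ^^ s) thue_morse = (\<lambda>_. 1)" by auto
  have "s < 2^s" by simp
  then have "(dlt ^^ (2^s)) thue_morse = (dlt ^^ (2^s - s)) ((dlt ^^ s) thue_morse)"
    by (metis funpow_add le_add_diff_inverse2 less_imp_le o_apply)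
  also have "\<dots> = (\<lambda>_. 1)" by (simp add: 1 dlt_one)
  finally have "(dlt ^^ (2^s)) thue_morse 0 = 1" by simp
  moreover have "(dlt ^^ (2^s)) thue_morse 0 = -1"
    using dlt_pow2[of thue_morse s 0] tm_sq tm_pow2 by simp
  ultimately show False by simp
qed

lemma cube_dot_Cons: "cube_dot (b # \<omega>) (x # hs) = (if b then x else 0) + cube_dot \<omega> hs"
  unfolding cube_dot_def length_Cons sum.lessThan_Suc_shift by (simp cong: if_cong)

lemma cube_dot_Nil: "cube_dot \<omega> [] = 0"
  unfolding cube_dot_def by simp

definition wn :: "bool list \<Rightarrow> nat" where "wn \<omega> = length (filter id \<omega>)"

lemma wn_Cons: "wn (b # \<omega>) = (if b then 1 else 0) + wn \<omega>"
  by (simp add: wn_def)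

lemma wn_le: "wn \<omega> \<le> length \<omega>"
  by (simp add: wn_def)

lemma cube_dot_replicate: "length \<omega> = n \<Longrightarrow> cube_dot \<omega> (replicate n c) = c * int (wn \<omega>)"
proof (induction \<omega> arbitrary: n)
  case Nil then show ?case by (simp add: cube_dot_Nil wn_def)
next
  case (Cons b \<omega>)
  then obtain n' where n: "n = Suc n'" "length \<omega> = n'" by auto
  show ?case using Cons.IH[OF n(2)] by (simp add: n cube_dot_Cons wn_Cons algebra_simps)
qed

lemma finite_vertices: "finite (cube_vertices s)"
proof -
  have "cube_vertices s = {xs. set xs \<subseteq> (UNIV::bool set) \<and> length xs = s}"
    by (auto simp: cube_vertices_def)
  then show ?thesis using finite_lists_length_eq[of "UNIV::bool set" s] by simp
qed

lemma vertices_Suc: "cube_vertices (Suc s) = Cons True ` cube_vertices s \<union> Cons False ` cube_vertices s"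
proof -
  have "\<omega> \<in> Cons True ` cube_vertices s \<union> Cons False ` cube_vertices s"
    if len: "length \<omega> = Suc s" for \<omega>
  proof -
    obtain b w where "\<omega> = b # w" "length w = s" using len by (cases \<omega>) auto
    then show ?thesis by (cases b) (auto simp: cube_vertices_def)
  qed
  then show ?thesis by (auto simp: cube_vertices_def)
qed

lemma prod_vertices_dlt:
  "(\<Prod>\<omega>\<in>cube_vertices s. thue_morse (y + wn \<omega>)) = (dlt ^^ s) thue_morse y"
proof (induction s arbitrary: y)
  case 0
  have "cube_vertices 0 = {[]}" by (auto simp: cube_vertices_def)
  then show ?case by (simp add: wn_def)
next
  case (Suc s)
  have d: "Cons True ` cube_vertices s \<inter> Cons False ` cube_vertices s = {}" by auto
  have "(\<Prod>\<omega>\<in>cube_vertices (Suc s). thue_morse (y + wn \<omega>)) =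
     (\<Prod>\<omega>\<in>Cons True ` cube_vertices s. thue_morse (y + wn \<omega>)) *
     (\<Prod>\<omega>\<in>Cons False ` cube_vertices s. thue_morse (y + wn \<omega>))"
    unfolding vertices_Suc by (rule prod.union_disjoint) (auto simp: finite_vertices d)
  also have "\<dots> = (\<Prod>\<omega>\<in>cube_vertices s. thue_morse (y + 1 + wn \<omega>)) *
     (\<Prod>\<omega>\<in>cube_vertices s. thue_morse (y + wn \<omega>))"
    by (simp add: prod.reindex wn_Cons add.assoc)
  also have "\<dots> = (dlt ^^ s) thue_morse y * (dlt ^^ s) thue_morse (y + 1)"
    using Suc.IH[of "y+1"] Suc.IH[of y] by simp
  also have "\<dots> = (dlt ^^ Suc s) thue_morse y"
    unfolding funpow.simps(2) o_apply dlt_def[of "(dlt ^^ s) thue_morse" y] ..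
  finally show ?case .
qed

lemma cube_dot_map2:
  assumes "length hs' = length f"
  shows "cube_dot \<omega> (map2 (\<lambda>a b. K * a + b) hs' f) = K * cube_dot \<omega> hs' + cube_dot \<omega> f"
  unfolding cube_dot_def using assms
  by (auto simp add: sum_distrib_left sum.distrib[symmetric] intro!: sum.cong)

lemma cube_dot_bounds:
  assumes "\<forall>x\<in>set hs. 0 \<le> x \<and> x \<le> b"
  shows "0 \<le> cube_dot \<omega> hs \<and> cube_dot \<omega> hs \<le> int (length hs) * b"
proof -
  have "0 \<le> cube_dot \<omega> hs" unfolding cube_dot_def using assms by (auto intro!: sum_nonneg)
  moreover have "cube_dot \<omega> hs \<le> (\<Sum>i<length hs. b)"
  proof (cases "hs = []")
    case True then show ?thesis by (simp add: cube_dot_def)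
  next
    case False
    then have "hd hs \<in> set hs" by simp
    then have "0 \<le> b" using assms by fastforce
    then show ?thesis unfolding cube_dot_def
      using assms by (intro sum_mono) auto
  qed
  ultimately show ?thesis by simp
qed

lemma cube_dot_zero_vertex: "length hs = n \<Longrightarrow> cube_dot (replicate n False) hs = 0"
  unfolding cube_dot_def by simp

lemma cube_dot_unit_vertex:
  assumes "i < length hs"
  shows "cube_dot ((replicate (length hs) False)[i := True]) hs = hs ! i"
proof -
  have "cube_dot ((replicate (length hs) False)[i := True]) hs = (\<Sum>j<length hs. if j = i then hs ! j else 0)"
    unfolding cube_dot_def by (intro sum.cong) (auto simp: nth_list_update)
  also have "\<dots> = hs ! i" using assms by simp
  finally show ?thesis .
qed

lemma int_le_div_iff:
  fixes K z m :: int
  assumes K: "K > 0"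
  shows "z \<le> m div K \<longleftrightarrow> K * z \<le> m"
proof
  assume "z \<le> m div K"
  then have "K * z \<le> K * (m div K)" using K by simp
  also have "\<dots> \<le> m" using K mult_div_mod_eq[of K m] pos_mod_sign[of K m] by linarith
  finally show "K * z \<le> m" .
next
  assume a: "K * z \<le> m"
  show "z \<le> m div K"
  proof (rule ccontr)
    assume "\<not> z \<le> m div K"
    then have "m div K + 1 \<le> z" by simp
    then have "K * (m div K + 1) \<le> K * z" using K by simp
    moreover have "m < K * (m div K + 1)"
    proof -
      have "K * (m div K + 1) = K * (m div K) + K" by (simp add: algebra_simps)
      then show ?thesis using K pos_mod_bound[of K m] mult_div_mod_eq[of K m] by linarith
    qed
    ultimately show False using a by simp
  qed
qed

lemma block_lt_iff:
  fixes K Y b N' \<nu> d :: int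
  assumes K: "K > 0" and b: "0 \<le> b" "b < K"
  shows "K * Y + b < K * N' + \<nu> + d \<longleftrightarrow> Y < N' + (\<nu> + d - b - 1 + K) div K"
proof -
  have e: "(\<nu> + d - b - 1 + K) div K = (\<nu> + d - b - 1) div K + 1"
    using K by simp
  have "K * (Y - N') = K * Y - K * N'" by (simp add: algebra_simps)
  then have "K * Y + b < K * N' + \<nu> + d \<longleftrightarrow> K * (Y - N') \<le> \<nu> + d - b - 1"
    by linarith
  also have "\<dots> \<longleftrightarrow> Y - N' \<le> (\<nu> + d - b - 1) div K" using int_le_div_iff[OF K] by simp
  also have "\<dots> \<longleftrightarrow> Y < N' + (\<nu> + d - b - 1 + K) div K" using e by linarith
  finally show ?thesis .
qed

lemma block_ge_iff:
  fixes K Y b :: int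
  assumes K: "K > 0" and b: "0 \<le> b" "b < K"
  shows "0 \<le> K * Y + b \<longleftrightarrow> 0 \<le> Y"
proof
  assume a: "0 \<le> K * Y + b"
  show "0 \<le> Y"
  proof (rule ccontr)
    assume "\<not> 0 \<le> Y"
    then have "Y \<le> -1" by simp
    then have "K * Y \<le> K * (-1)" using K by (intro mult_left_mono) auto
    then show False using a b by simp
  qed
next
  assume "0 \<le> Y" then show "0 \<le> K * Y + b" using K b by simp
qed

definition supp :: "nat \<Rightarrow> nat \<Rightarrow> (bool list \<Rightarrow> int) \<Rightarrow> (bool list \<Rightarrow> int) \<Rightarrow> (int \<times> int list) set" where
  "supp s N r d = {(n, hs). length hs = s \<and> (\<forall>\<omega>\<in>cube_vertices s.
       0 \<le> n + cube_dot \<omega> hs + r \<omega> \<and> n + cube_dot \<omega> hs + r \<omega> < int N + d \<omega>)}"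

definition GG :: "nat \<Rightarrow> nat \<Rightarrow> (bool list \<Rightarrow> int) \<Rightarrow> (bool list \<Rightarrow> int) \<Rightarrow> real" where
  "GG s N r d = (\<Sum>(n, hs)\<in>supp s N r d. \<Prod>\<omega>\<in>cube_vertices s. thue_morse (nat (n + cube_dot \<omega> hs + r \<omega>)))"

lemma supp_cong:
  assumes "\<And>\<omega>. \<omega> \<in> cube_vertices s \<Longrightarrow> r \<omega> = r' \<omega>" "\<And>\<omega>. \<omega> \<in> cube_vertices s \<Longrightarrow> d \<omega> = d' \<omega>"
  shows "supp s N r d = supp s N r' d'"
  by (force simp: supp_def assms)

lemma GG_cong:
  assumes "\<And>\<omega>. \<omega> \<in> cube_vertices s \<Longrightarrow> r \<omega> = r' \<omega>" "\<And>\<omega>. \<omega> \<in> cube_vertices s \<Longrightarrow> d \<omega> = d' \<omega>"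
  shows "GG s N r d = GG s N r' d'"
proof -
  have S: "supp s N r d = supp s N r' d'" by (rule supp_cong[OF assms])
  show ?thesis unfolding GG_def S
    by (intro sum.cong refl) (auto intro!: prod.cong simp: assms(1))
qed

lemma zero_vertex: "replicate s False \<in> cube_vertices s"
  by (simp add: cube_vertices_def)

lemma unit_vertex: "(replicate s False)[i := True] \<in> cube_vertices s"
  by (simp add: cube_vertices_def)

lemma finite_supp: "finite (supp s N r d)"
proof -
  define V where "V = cube_vertices s"
  define R where "R = (\<Sum>\<omega>\<in>V. \<bar>r \<omega>\<bar> + \<bar>d \<omega>\<bar>)"
  have Rb: "\<bar>r \<omega>\<bar> \<le> R \<and> \<bar>d \<omega>\<bar> \<le> R" if "\<omega> \<in> V" for \<omega>
  proof -
    have "\<bar>r \<omega>\<bar> + \<bar>d \<omega>\<bar> \<le> R" unfolding R_def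
      by (rule member_le_sum) (use that finite_vertices V_def in auto)
    then show ?thesis by auto
  qed
  define B where "B = int N + 3 * R + 1"
  have "supp s N r d \<subseteq> {-B..B} \<times> {xs. set xs \<subseteq> {-B..B} \<and> length xs = s}"
  proof safe
    fix n hs assume m: "(n, hs) \<in> supp s N r d"
    then have len: "length hs = s" and all: "\<forall>\<omega>\<in>V. 0 \<le> n + cube_dot \<omega> hs + r \<omega> \<and> n + cube_dot \<omega> hs + r \<omega> < int N + d \<omega>"
      by (auto simp: supp_def V_def)
    have z: "0 \<le> n + r (replicate s False) \<and> n + r (replicate s False) < int N + d (replicate s False)"
      using all zero_vertex[of s] cube_dot_zero_vertex[OF len] by (force simp: V_def)
    have zb: "\<bar>r (replicate s False)\<bar> \<le> R \<and> \<bar>d (replicate s False)\<bar> \<le> R"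
      using Rb zero_vertex[of s] by (simp add: V_def)
    show "n \<in> {-B..B}" using z zb unfolding B_def by auto
    fix x assume "x \<in> set hs"
    then obtain i where i: "i < length hs" "x = hs ! i" by (auto simp: in_set_conv_nth)
    let ?w = "(replicate s False)[i := True]"
    have u: "0 \<le> n + x + r ?w \<and> n + x + r ?w < int N + d ?w"
      using all unit_vertex[of s i] cube_dot_unit_vertex[OF i(1)] i len by (force simp: V_def)
    have ub: "\<bar>r ?w\<bar> \<le> R \<and> \<bar>d ?w\<bar> \<le> R"
      using Rb unit_vertex[of s i] by (simp add: V_def)
    show "x \<in> {-B..B}" using u ub z zb unfolding B_def by auto
  next
    fix n hs assume "(n, hs) \<in> supp s N r d" then show "length hs = s" by (simp add: supp_def)
  qed
  moreover have "finite ({-B..B} \<times> {xs. set xs \<subseteq> {-B..B} \<and> length xs = s})"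
    by (intro finite_cartesian_product finite_lists_length_eq) auto
  ultimately show ?thesis by (rule finite_subset)
qed

definition PP :: "nat \<Rightarrow> nat \<Rightarrow> (int \<times> int list) set" where
  "PP s k = {0..<(2::int)^k} \<times> {f. set f \<subseteq> {0..<(2::int)^k} \<and> length f = s}"

definition cc :: "int \<Rightarrow> int list \<Rightarrow> (bool list \<Rightarrow> int) \<Rightarrow> bool list \<Rightarrow> int" where
  "cc e f r \<omega> = e + cube_dot \<omega> f + r \<omega>"

definition qq :: "nat \<Rightarrow> int \<Rightarrow> int list \<Rightarrow> (bool list \<Rightarrow> int) \<Rightarrow> bool list \<Rightarrow> int" where
  "qq k e f r \<omega> = cc e f r \<omega> div 2^k"

definition bb :: "nat \<Rightarrow> int \<Rightarrow> int list \<Rightarrow> (bool list \<Rightarrow> int) \<Rightarrow> bool list \<Rightarrow> int" where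
  "bb k e f r \<omega> = cc e f r \<omega> mod 2^k"

definition dd :: "nat \<Rightarrow> nat \<Rightarrow> (bool list \<Rightarrow> int) \<Rightarrow> int \<Rightarrow> int list \<Rightarrow> (bool list \<Rightarrow> int) \<Rightarrow> bool list \<Rightarrow> int" where
  "dd k N d e f r \<omega> = (int (N mod 2^k) + d \<omega> - bb k e f r \<omega> - 1 + 2^k) div 2^k"

definition sig :: "nat \<Rightarrow> nat \<Rightarrow> int \<Rightarrow> int list \<Rightarrow> (bool list \<Rightarrow> int) \<Rightarrow> real" where
  "sig s k e f r = (\<Prod>\<omega>\<in>cube_vertices s. thue_morse (nat (bb k e f r \<omega>)))"

definition emb :: "nat \<Rightarrow> (int \<times> int list) \<times> (int \<times> int list) \<Rightarrow> int \<times> int list" where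
  "emb k p = (2^k * fst (snd p) + fst (fst p), map2 (\<lambda>a b. 2^k * a + b) (snd (snd p)) (snd (fst p)))"

definition prj :: "nat \<Rightarrow> int \<times> int list \<Rightarrow> (int \<times> int list) \<times> (int \<times> int list)" where
  "prj k x = ((fst x mod 2^k, map (\<lambda>h. h mod 2^k) (snd x)), (fst x div 2^k, map (\<lambda>h. h div 2^k) (snd x)))"

lemma vertex_split:
  assumes f: "length f = length hs'"
  shows "2^k * n' + e + cube_dot \<omega> (map2 (\<lambda>a b. 2^k * a + b) hs' f) + r \<omega>
       = 2^k * (n' + cube_dot \<omega> hs' + qq k e f r \<omega>) + bb k e f r \<omega>"
proof -
  have "cc e f r \<omega> = 2^k * qq k e f r \<omega> + bb k e f r \<omega>"
    unfolding qq_def bb_def by simp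
  then show ?thesis using cube_dot_map2[where K="2^k" and \<omega>=\<omega> and hs'=hs' and f=f] f
    unfolding cc_def by (simp add: algebra_simps)
qed

lemma bb_bounds: "0 \<le> bb k e f r \<omega> \<and> bb k e f r \<omega> < 2^k"
  unfolding bb_def by simp

lemma mem_iff:
  assumes f: "length f = s" and h: "length hs' = s"
  shows "emb k ((e, f), (n', hs')) \<in> supp s N r d \<longleftrightarrow>
         (n', hs') \<in> supp s (N div 2^k) (qq k e f r) (dd k N d e f r)"
proof -
  define K :: int where "K = 2^k"
  have K: "K > 0" by (simp add: K_def)
  have NN: "int N = K * int (N div 2^k) + int (N mod 2^k)"
  proof -
    have "N = 2^k * (N div 2^k) + N mod 2^k" by simp
    then have "int N = int (2^k * (N div 2^k) + N mod 2^k)" by (rule arg_cong)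
    also have "\<dots> = K * int (N div 2^k) + int (N mod 2^k)" unfolding K_def
      by (simp only: of_nat_add of_nat_mult of_nat_power of_nat_numeral)
    finally show ?thesis .
  qed
  have pt: "(0 \<le> 2^k * n' + e + cube_dot \<omega> (map2 (\<lambda>a b. 2^k * a + b) hs' f) + r \<omega> \<and>
        2^k * n' + e + cube_dot \<omega> (map2 (\<lambda>a b. 2^k * a + b) hs' f) + r \<omega> < int N + d \<omega>) \<longleftrightarrow>
        (0 \<le> n' + cube_dot \<omega> hs' + qq k e f r \<omega> \<and>
        n' + cube_dot \<omega> hs' + qq k e f r \<omega> < int (N div 2^k) + dd k N d e f r \<omega>)" for \<omega>
  proof -
    define Y where "Y = n' + cube_dot \<omega> hs' + qq k e f r \<omega>"
    define b where "b = bb k e f r \<omega>"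
    have b: "0 \<le> b" "b < K" using bb_bounds unfolding b_def K_def by auto
    have x: "2^k * n' + e + cube_dot \<omega> (map2 (\<lambda>a b. 2^k * a + b) hs' f) + r \<omega> = K * Y + b"
      unfolding Y_def b_def K_def using vertex_split[of f hs'] f h by simp
    have dd: "dd k N d e f r \<omega> = (int (N mod 2^k) + d \<omega> - b - 1 + K) div K"
      unfolding dd_def b_def K_def by simp
    show ?thesis unfolding x Y_def[symmetric] dd NN
      using block_ge_iff[OF K b] block_lt_iff[OF K b, of Y "int (N div 2^k)" "int (N mod 2^k)" "d \<omega>"]
      by (simp add: add.assoc)
  qed
  show ?thesis unfolding supp_def emb_def using f h pt by auto
qed

lemma val_split:
  assumes f: "length f = s" and h: "length hs' = s"
    and Y: "0 \<le> n' + cube_dot \<omega> hs' + qq k e f r \<omega>"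
  shows "thue_morse (nat (2^k * n' + e + cube_dot \<omega> (map2 (\<lambda>a b. 2^k * a + b) hs' f) + r \<omega>))
       = thue_morse (nat (bb k e f r \<omega>)) * thue_morse (nat (n' + cube_dot \<omega> hs' + qq k e f r \<omega>))"
proof -
  define Y where "Y = n' + cube_dot \<omega> hs' + qq k e f r \<omega>"
  define b where "b = bb k e f r \<omega>"
  have b: "0 \<le> b" "b < 2^k" using bb_bounds unfolding b_def by auto
  have "nat (2^k * n' + e + cube_dot \<omega> (map2 (\<lambda>a b. 2^k * a + b) hs' f) + r \<omega>) = nat (2^k * Y + b)"
    unfolding Y_def b_def using vertex_split[of f hs'] f h by simp
  also have "\<dots> = 2^k * nat Y + nat b" using Y b unfolding Y_def
    by (simp add: nat_add_distrib nat_mult_distrib nat_power_eq)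
  finally have e: "nat (2^k * n' + e + cube_dot \<omega> (map2 (\<lambda>a b. 2^k * a + b) hs' f) + r \<omega>) = 2^k * nat Y + nat b" .
  have "nat b < 2^k" using b by (simp add: nat_less_iff)
  from tm_mult[OF this, of "nat Y"] show ?thesis unfolding e Y_def b_def by (simp add: mult.commute)
qed

lemma finite_PP: "finite (PP s k)"
  unfolding PP_def by (intro finite_cartesian_product finite_lists_length_eq) auto

lemma emb_eq: "emb k ((e, f), (n', hs')) = (2^k * n' + e, map2 (\<lambda>a b. 2^k * a + b) hs' f)"
  by (simp add: emb_def)

lemma GG_rec:
  "GG s N r d = (\<Sum>p\<in>PP s k. sig s k (fst p) (snd p) r *
      GG s (N div 2^k) (qq k (fst p) (snd p) r) (dd k N d (fst p) (snd p) r))"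
proof -
  define K :: int where "K = 2^k"
  have K: "K > 0" by (simp add: K_def)
  define S' where "S' p = supp s (N div 2^k) (qq k (fst p) (snd p) r) (dd k N d (fst p) (snd p) r)" for p
  define g where "g = (\<lambda>(n, hs). \<Prod>\<omega>\<in>cube_vertices s. thue_morse (nat (n + cube_dot \<omega> hs + r \<omega>)))"
  have right: "emb k (prj k x) = x" for x
  proof -
    obtain n hs where x: "x = (n, hs)" by (cases x)
    have "map2 (\<lambda>a b. 2 ^ k * a + b) (map (\<lambda>h. h div 2 ^ k) hs) (map (\<lambda>h. h mod 2 ^ k) hs) = hs"
      by (rule nth_equalityI) auto
    then show ?thesis unfolding x emb_def prj_def by simp
  qed
  have bij: "bij_betw (emb k) (Sigma (PP s k) S') (supp s N r d)"
  proof (rule bij_betw_byWitness[where f'="prj k"])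
    show "\<forall>a\<in>Sigma (PP s k) S'. prj k (emb k a) = a"
    proof
      fix a assume a: "a \<in> Sigma (PP s k) S'"
      obtain e f n' hs' where aa: "a = ((e, f), (n', hs'))" by (metis prod.collapse)
      have e: "0 \<le> e" "e < 2^k" and f: "set f \<subseteq> {0..<2^k}" "length f = s"
        using a aa by (auto simp: PP_def)
      have h: "length hs' = s" using a aa by (auto simp: S'_def supp_def)
      have 1: "map (\<lambda>h. h mod 2 ^ k) (map2 (\<lambda>a b. 2 ^ k * a + b) hs' f) = f"
      proof (rule nth_equalityI)
        fix i assume "i < length (map (\<lambda>h. h mod 2 ^ k) (map2 (\<lambda>a b. 2 ^ k * a + b) hs' f))"
        then have i: "i < s" using f h by simp
        then have "f ! i \<in> set f" using f by simp
        then have "0 \<le> f ! i" "f ! i < 2^k" using f by auto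
        then show "map (\<lambda>h. h mod 2 ^ k) (map2 (\<lambda>a b. 2 ^ k * a + b) hs' f) ! i = f ! i"
          using i f h by simp
      qed (use f h in simp)
      have 2: "map (\<lambda>h. h div 2 ^ k) (map2 (\<lambda>a b. 2 ^ k * a + b) hs' f) = hs'"
      proof (rule nth_equalityI)
        fix i assume "i < length (map (\<lambda>h. h div 2 ^ k) (map2 (\<lambda>a b. 2 ^ k * a + b) hs' f))"
        then have i: "i < s" using f h by simp
        then have "f ! i \<in> set f" using f by simp
        then have "0 \<le> f ! i" "f ! i < 2^k" using f by auto
        then show "map (\<lambda>h. h div 2 ^ k) (map2 (\<lambda>a b. 2 ^ k * a + b) hs' f) ! i = hs' ! i"
          using i f h by simp
      qed (use f h in simp)
      show "prj k (emb k a) = a" unfolding aa emb_eq prj_def using e 1 2 by simp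
    qed
    show "\<forall>a'\<in>supp s N r d. emb k (prj k a') = a'" using right by blast
    show "emb k ` Sigma (PP s k) S' \<subseteq> supp s N r d"
    proof
      fix x assume "x \<in> emb k ` Sigma (PP s k) S'"
      then obtain e f n' hs' where xx: "x = emb k ((e, f), (n', hs'))" and p: "(e, f) \<in> PP s k"
        and z: "(n', hs') \<in> S' (e, f)" by force
      have f: "length f = s" using p by (auto simp: PP_def)
      have h: "length hs' = s" using z by (auto simp: S'_def supp_def)
      show "x \<in> supp s N r d" unfolding xx
        using mem_iff[OF f h] z by (simp add: S'_def)
    qed
    show "prj k ` supp s N r d \<subseteq> Sigma (PP s k) S'"
    proof
      fix y assume "y \<in> prj k ` supp s N r d"
      then obtain n hs where yy: "y = prj k (n, hs)" and x: "(n, hs) \<in> supp s N r d" by force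
      have h: "length hs = s" using x by (simp add: supp_def)
      define e where "e = n mod 2^k"
      define f where "f = map (\<lambda>h. h mod (2::int)^k) hs"
      define n' where "n' = n div 2^k"
      define hs' where "hs' = map (\<lambda>h. h div (2::int)^k) hs"
      have pe: "prj k (n, hs) = ((e, f), (n', hs'))" by (simp add: prj_def e_def f_def n'_def hs'_def)
      have pin: "(e, f) \<in> PP s k" unfolding PP_def e_def f_def using h by auto
      have lf: "length f = s" "length hs' = s" using h by (auto simp: f_def hs'_def)
      have "emb k ((e, f), (n', hs')) = (n, hs)" using right[of "(n, hs)"] pe by simp
      then have "(n', hs') \<in> S' (e, f)" using mem_iff[OF lf, of k e n' N r d] x by (simp add: S'_def)
      then show "y \<in> Sigma (PP s k) S'" using pe pin yy by simp
    qed
  qed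
  have "GG s N r d = sum g (supp s N r d)" by (simp add: GG_def g_def)
  also have "\<dots> = (\<Sum>x\<in>Sigma (PP s k) S'. g (emb k x))"
    by (rule sum.reindex_bij_betw[OF bij, symmetric])
  also have "\<dots> = (\<Sum>p\<in>PP s k. \<Sum>z\<in>S' p. g (emb k (p, z)))"
    by (subst sum.Sigma) (auto simp: finite_PP S'_def finite_supp split_def)
  also have "\<dots> = (\<Sum>p\<in>PP s k. sig s k (fst p) (snd p) r *
      GG s (N div 2^k) (qq k (fst p) (snd p) r) (dd k N d (fst p) (snd p) r))"
  proof (rule sum.cong[OF refl])
    fix p assume p: "p \<in> PP s k"
    obtain e f where pp: "p = (e, f)" by (cases p)
    have f: "length f = s" using p pp by (auto simp: PP_def)
    have "(\<Sum>z\<in>S' p. g (emb k (p, z))) = (\<Sum>z\<in>S' p. sig s k e f r *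
       (\<Prod>\<omega>\<in>cube_vertices s. thue_morse (nat (fst z + cube_dot \<omega> (snd z) + qq k e f r \<omega>))))"
    proof (rule sum.cong[OF refl])
      fix z assume z: "z \<in> S' p"
      obtain n' hs' where zz: "z = (n', hs')" by (cases z)
      have h: "length hs' = s" using z zz by (auto simp: S'_def supp_def)
      have Y: "0 \<le> n' + cube_dot \<omega> hs' + qq k e f r \<omega>" if "\<omega> \<in> cube_vertices s" for \<omega>
        using z zz pp that by (auto simp: S'_def supp_def)
      show "g (emb k (p, z)) = sig s k e f r *
       (\<Prod>\<omega>\<in>cube_vertices s. thue_morse (nat (fst z + cube_dot \<omega> (snd z) + qq k e f r \<omega>)))"
        unfolding pp zz emb_eq g_def sig_def prod.distrib[symmetric]
        using val_split[OF f h Y] by (auto intro!: prod.cong)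
    qed
    also have "\<dots> = sig s k e f r * GG s (N div 2^k) (qq k e f r) (dd k N d e f r)"
      unfolding GG_def sum_distrib_left S'_def pp by (simp add: split_def)
    finally show "(\<Sum>z\<in>S' p. g (emb k (p, z))) = sig s k (fst p) (snd p) r *
      GG s (N div 2^k) (qq k (fst p) (snd p) r) (dd k N d (fst p) (snd p) r)" using pp by simp
  qed
  finally show ?thesis .
qed

lemma GG_abs_le_card: "\<bar>GG s N r d\<bar> \<le> real (card (supp s N r d))"
proof -
  have "\<bar>GG s N r d\<bar> \<le> (\<Sum>x\<in>supp s N r d. \<bar>(\<lambda>(n, hs). \<Prod>\<omega>\<in>cube_vertices s. thue_morse (nat (n + cube_dot \<omega> hs + r \<omega>))) x\<bar>)"
    unfolding GG_def by (rule sum_abs)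
  also have "\<dots> = (\<Sum>x\<in>supp s N r d. 1)"
    by (intro sum.cong refl) (auto simp: abs_prod)
  finally show ?thesis by simp
qed

lemma GG_zero:
  assumes d: "\<And>\<omega>. \<omega> \<in> cube_vertices s \<Longrightarrow> d \<omega> \<le> 1"
  shows "\<bar>GG s 0 r d\<bar> \<le> 1"
proof -
  have "card (supp s 0 r d) \<le> Suc 0"
  proof (subst card_le_Suc0_iff_eq[OF finite_supp], safe)
    fix n hs n2 hs2
    assume a: "(n, hs) \<in> supp s 0 r d" and b: "(n2, hs2) \<in> supp s 0 r d"
    have la: "length hs = s" and lb: "length hs2 = s" using a b by (auto simp: supp_def)
    let ?z = "replicate s False"
    have za: "n + r ?z = 0" using a zero_vertex[of s] d[OF zero_vertex[of s]] cube_dot_zero_vertex[OF la]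
      unfolding supp_def by fastforce
    have zb: "n2 + r ?z = 0" using b zero_vertex[of s] d[OF zero_vertex[of s]] cube_dot_zero_vertex[OF lb]
      unfolding supp_def by fastforce
    show "n = n2" using za zb by simp
    show "hs = hs2"
    proof (rule nth_equalityI)
      show "length hs = length hs2" using la lb by simp
      fix i assume "i < length hs"
      then have i: "i < length hs" "i < length hs2" using la lb by auto
      let ?w = "(replicate s False)[i := True]"
      have ua: "n + hs ! i + r ?w = 0" using a unit_vertex[of s i] d[OF unit_vertex[of s i]]
          cube_dot_unit_vertex[OF i(1)] la unfolding supp_def by fastforce
      have ub: "n2 + hs2 ! i + r ?w = 0" using b unit_vertex[of s i] d[OF unit_vertex[of s i]]
          cube_dot_unit_vertex[OF i(2)] lb unfolding supp_def by fastforce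
      show "hs ! i = hs2 ! i" using ua ub za zb by simp
    qed
  qed
  then show ?thesis using GG_abs_le_card[of s 0 r d] by simp
qed

lemma qq_bounds:
  assumes p: "(e, f) \<in> PP s k" and w: "\<omega> \<in> cube_vertices s" and r: "0 \<le> r \<omega>" "r \<omega> \<le> int s + 1"
  shows "0 \<le> qq k e f r \<omega> \<and> qq k e f r \<omega> \<le> int s + 1"
proof -
  define K :: int where "K = 2^k"
  have K: "K > 0" by (simp add: K_def)
  have e: "0 \<le> e" "e \<le> K - 1" and f: "\<forall>x\<in>set f. 0 \<le> x \<and> x \<le> K - 1" "length f = s"
    using p by (auto simp: PP_def K_def)
  have cd: "0 \<le> cube_dot \<omega> f" "cube_dot \<omega> f \<le> int s * (K - 1)" using cube_dot_bounds[OF f(1)] f(2) by auto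
  have c0: "0 \<le> cc e f r \<omega>" using e cd r unfolding cc_def by simp
  have c1: "cc e f r \<omega> < K * (int s + 2)"
  proof -
    have "cc e f r \<omega> \<le> (K - 1) + int s * (K - 1) + (int s + 1)" using e cd r unfolding cc_def by simp
    also have "\<dots> = K * (int s + 1)" by (simp add: algebra_simps)
    also have "\<dots> < K * (int s + 2)" using K by simp
    finally show ?thesis .
  qed
  have "0 \<le> cc e f r \<omega> div K" using int_le_div_iff[OF K, of 0] c0 by simp
  moreover have "\<not> int s + 2 \<le> cc e f r \<omega> div K" using int_le_div_iff[OF K, of "int s + 2"] c1 by simp
  ultimately show ?thesis unfolding qq_def K_def[symmetric] by simp
qed

lemma dd_bounds:
  assumes d: "0 \<le> d \<omega>" "d \<omega> \<le> 1"
  shows "0 \<le> dd k N d e f r \<omega> \<and> dd k N d e f r \<omega> \<le> 1"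
proof -
  define K :: int where "K = 2^k"
  have K: "K > 0" by (simp add: K_def)
  have nu: "0 \<le> int (N mod 2^k)" "int (N mod 2^k) < K"
  proof -
    have "N mod 2^k < 2^k" by simp
    then show "int (N mod 2^k) < K" unfolding K_def by (metis of_nat_less_iff of_nat_numeral of_nat_power)
  qed simp
  have b: "0 \<le> bb k e f r \<omega>" "bb k e f r \<omega> < K" using bb_bounds unfolding K_def by auto
  define n0 where "n0 = int (N mod 2^k) + d \<omega> - bb k e f r \<omega> - 1 + K"
  have "0 \<le> n0" "n0 < K * 2" using nu b d unfolding n0_def by auto
  then have "0 \<le> n0 div K" "\<not> 2 \<le> n0 div K"
    using int_le_div_iff[OF K, of 0 n0] int_le_div_iff[OF K, of 2 n0] by (auto simp: mult.commute)
  then show ?thesis unfolding dd_def n0_def[unfolded K_def] K_def by simp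
qed

lemma window:
  fixes H c \<nu> d bt :: int
  assumes H: "H > 0" and bt: "bt = (if H \<le> \<nu> then 0 else 1)" and nu: "0 \<le> \<nu>" "\<nu> < 2 * H"
    and d: "0 \<le> d" "d \<le> 1" and c: "H * bt \<le> c" "c < H * bt + H"
  shows "c div (2*H) = 0 \<and> c mod (2*H) = c \<and> (\<nu> + d - c - 1 + 2 * H) div (2 * H) = 1 - bt"
proof -
  have K: "2 * H > 0" using H by simp
  have c0: "0 \<le> c" "c < 2 * H" using c H bt by (auto split: if_splits)
  then have 1: "c div (2*H) = 0" "c mod (2*H) = c" by auto
  define n0 where "n0 = \<nu> + d - c - 1 + 2 * H"
  have "n0 div (2*H) = 1 - bt"
  proof (cases "H \<le> \<nu>")
    case True
    then have "2 * H \<le> n0" "n0 < 2 * H * 2" using c d nu bt unfolding n0_def by auto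
    then have "1 \<le> n0 div (2*H)" "\<not> 2 \<le> n0 div (2*H)"
      using int_le_div_iff[OF K, of 1 n0] int_le_div_iff[OF K, of 2 n0] by auto
    then show ?thesis using True bt by simp
  next
    case False
    then have "0 \<le> n0" "n0 < 2 * H" using c d nu bt unfolding n0_def by auto
    then show ?thesis using False bt by simp
  qed
  then show ?thesis using 1 unfolding n0_def by simp
qed

lemma cancel:
  assumes s: "s \<ge> 1" and m: "int s + 1 < 2^m" and y: "(dlt ^^ s) thue_morse y = -1"
    and kp: "y + s < 2^k'"
    and r: "\<And>\<omega>. \<omega> \<in> cube_vertices s \<Longrightarrow> 0 \<le> r \<omega> \<and> r \<omega> \<le> int s + 1"
    and d: "\<And>\<omega>. \<omega> \<in> cube_vertices s \<Longrightarrow> 0 \<le> d \<omega> \<and> d \<omega> \<le> 1"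
    and k: "k = m + k' + 1"
  shows "\<exists>A B. A \<in> PP s k \<and> B \<in> PP s k \<and> A \<noteq> B \<and>
    GG s N r d = (\<Sum>p\<in>PP s k - {A, B}. sig s k (fst p) (snd p) r *
      GG s (N div 2^k) (qq k (fst p) (snd p) r) (dd k N d (fst p) (snd p) r))"
proof -
  define H :: int where "H = 2^(m+k')"
  have H: "H > 0" by (simp add: H_def)
  have KH: "(2::int)^k = 2 * H" unfolding k H_def by simp
  have Hm: "H = 2^m * 2^k'" unfolding H_def by (simp add: power_add)
  define \<nu> where "\<nu> = int (N mod 2^k)"
  have nu: "0 \<le> \<nu>" "\<nu> < 2 * H"
  proof -
    have "N mod 2^k < 2^k" by simp
    then have "int (N mod 2^k) < int (2^k)" by (simp only: of_nat_less_iff)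
    then show "\<nu> < 2 * H" unfolding \<nu>_def KH[symmetric] by simp
  qed (simp add: \<nu>_def)
  define bt :: int where "bt = (if H \<le> \<nu> then 0 else 1)"
  have bt01: "bt = 0 \<or> bt = 1" by (simp add: bt_def)
  define bn where "bn = nat bt"
  have bn: "int bn = bt" using bt01 by (auto simp: bn_def)
  define A where "A = (H * bt, replicate s (0::int))"
  define B where "B = (H * bt + 2^m * int y, replicate s ((2::int)^m))"
  have m2: "(2::int)^m \<le> H" unfolding Hm by simp
  have "y < 2^k'" using kp by simp
  then have "int y < int (2^k')" by (simp only: of_nat_less_iff)
  then have yk: "int y < 2^k'" by simp
  have yH: "2^m * int y < H" unfolding Hm using yk by simp
  have AP: "A \<in> PP s k" unfolding A_def PP_def KH using H bt01 by auto
  have BP: "B \<in> PP s k" unfolding B_def PP_def KH using H bt01 yH m2 by auto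
  have AB: "A \<noteq> B" unfolding A_def B_def using s by (cases s) auto
  define Fp where "Fp p = sig s k (fst p) (snd p) r *
      GG s (N div 2^k) (qq k (fst p) (snd p) r) (dd k N d (fst p) (snd p) r)" for p
  have cA: "cc (fst A) (snd A) r \<omega> = H * bt + r \<omega>" if "\<omega> \<in> cube_vertices s" for \<omega>
    using that cube_dot_replicate[of \<omega> s 0] unfolding A_def cc_def by (simp add: cube_vertices_def)
  have cB: "cc (fst B) (snd B) r \<omega> = H * bt + 2^m * (int y + int (wn \<omega>)) + r \<omega>" if "\<omega> \<in> cube_vertices s" for \<omega>
    using that cube_dot_replicate[of \<omega> s "2^m"] unfolding B_def cc_def
    by (simp add: cube_vertices_def algebra_simps)
  have rm: "r \<omega> < 2^m" "0 \<le> r \<omega>" if "\<omega> \<in> cube_vertices s" for \<omega> using r[OF that] m by auto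
  have wB: "2^m * (int y + int (wn \<omega>)) + r \<omega> < H" if "\<omega> \<in> cube_vertices s" for \<omega>
  proof -
    have "wn \<omega> \<le> s" using wn_le[of \<omega>] that by (simp add: cube_vertices_def)
    then have "y + wn \<omega> + 1 \<le> 2^k'" using kp by simp
    then have "int (y + wn \<omega> + 1) \<le> int (2^k')" by (simp only: of_nat_le_iff)
    then have "int y + int (wn \<omega>) + 1 \<le> 2^k'" by simp
    then have "2^m * (int y + int (wn \<omega>) + 1) \<le> (2::int)^m * 2^k'" by (intro mult_left_mono) auto
    then show ?thesis using rm[OF that] unfolding Hm by (simp add: algebra_simps)
  qed
  have winA: "qq k (fst A) (snd A) r \<omega> = 0 \<and> bb k (fst A) (snd A) r \<omega> = H * bt + r \<omega>
      \<and> dd k N d (fst A) (snd A) r \<omega> = 1 - bt" if w: "\<omega> \<in> cube_vertices s" for \<omega>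
  proof -
    have "H * bt \<le> H * bt + r \<omega>" "H * bt + r \<omega> < H * bt + H" using rm[OF w] m2 by auto
    from window[OF H bt_def nu d[OF w, THEN conjunct1] d[OF w, THEN conjunct2] this]
    show ?thesis unfolding qq_def bb_def dd_def KH cA[OF w] \<nu>_def[symmetric] by simp
  qed
  have winB: "qq k (fst B) (snd B) r \<omega> = 0 \<and> bb k (fst B) (snd B) r \<omega> = H * bt + 2^m * (int y + int (wn \<omega>)) + r \<omega>
      \<and> dd k N d (fst B) (snd B) r \<omega> = 1 - bt" if w: "\<omega> \<in> cube_vertices s" for \<omega>
  proof -
    have "H * bt \<le> H * bt + 2^m * (int y + int (wn \<omega>)) + r \<omega>"
         "H * bt + 2^m * (int y + int (wn \<omega>)) + r \<omega> < H * bt + H" using rm[OF w] wB[OF w] by auto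
    from window[OF H bt_def nu d[OF w, THEN conjunct1] d[OF w, THEN conjunct2] this]
    show ?thesis unfolding qq_def bb_def dd_def KH cB[OF w] \<nu>_def[symmetric] by simp
  qed
  have GAB: "GG s (N div 2^k) (qq k (fst A) (snd A) r) (dd k N d (fst A) (snd A) r) =
             GG s (N div 2^k) (qq k (fst B) (snd B) r) (dd k N d (fst B) (snd B) r)"
    by (rule GG_cong) (use winA winB in auto)
  have tA: "thue_morse (nat (bb k (fst A) (snd A) r \<omega>)) = thue_morse bn * thue_morse (nat (r \<omega>))"
    if w: "\<omega> \<in> cube_vertices s" for \<omega>
  proof -
    have "int (2^m * (2^k' * bn) + nat (r \<omega>)) = H * bt + r \<omega>"
      using rm[OF w] bn unfolding Hm by simp
    then have e: "nat (bb k (fst A) (snd A) r \<omega>) = 2^m * (2^k' * bn) + nat (r \<omega>)"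
      using winA[OF w] by linarith
    have lt: "nat (r \<omega>) < 2^m" using rm[OF w] by (simp add: nat_less_iff)
    show ?thesis unfolding e tm_mult[OF lt] using tm_mult[of 0 k' bn] by simp
  qed
  have tB: "thue_morse (nat (bb k (fst B) (snd B) r \<omega>)) = thue_morse bn * thue_morse (nat (r \<omega>)) * thue_morse (y + wn \<omega>)"
    if w: "\<omega> \<in> cube_vertices s" for \<omega>
  proof -
    have "int (2^m * (2^k' * bn + (y + wn \<omega>)) + nat (r \<omega>)) = H * bt + 2^m * (int y + int (wn \<omega>)) + r \<omega>"
      using rm[OF w] bn unfolding Hm by (simp add: algebra_simps)
    then have e: "nat (bb k (fst B) (snd B) r \<omega>) = 2^m * (2^k' * bn + (y + wn \<omega>)) + nat (r \<omega>)"
      using winB[OF w] by linarith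
    have lt: "nat (r \<omega>) < 2^m" using rm[OF w] by (simp add: nat_less_iff)
    have "wn \<omega> \<le> s" using wn_le[of \<omega>] w by (simp add: cube_vertices_def)
    then have lt2: "y + wn \<omega> < 2^k'" using kp by simp
    show ?thesis unfolding e tm_mult[OF lt] tm_mult[OF lt2] by simp
  qed
  have sAB: "sig s k (fst B) (snd B) r = - sig s k (fst A) (snd A) r"
  proof -
    have "sig s k (fst B) (snd B) r = (\<Prod>\<omega>\<in>cube_vertices s. thue_morse bn * thue_morse (nat (r \<omega>)) * thue_morse (y + wn \<omega>))"
      unfolding sig_def by (rule prod.cong) (auto simp: tB)
    also have "\<dots> = (\<Prod>\<omega>\<in>cube_vertices s. thue_morse bn * thue_morse (nat (r \<omega>))) * (\<Prod>\<omega>\<in>cube_vertices s. thue_morse (y + wn \<omega>))"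
      by (rule prod.distrib)
    also have "(\<Prod>\<omega>\<in>cube_vertices s. thue_morse bn * thue_morse (nat (r \<omega>))) = sig s k (fst A) (snd A) r"
      unfolding sig_def by (rule prod.cong) (auto simp: tA)
    finally show ?thesis using prod_vertices_dlt[where s=s and y=y] y by simp
  qed
  have "GG s N r d = sum Fp (PP s k)" unfolding Fp_def by (rule GG_rec)
  also have "\<dots> = sum Fp (PP s k - {A, B}) + sum Fp {A, B}"
    by (rule sum.subset_diff) (use AP BP finite_PP in auto)
  also have "sum Fp {A, B} = 0" using AB unfolding Fp_def by (simp add: sAB GAB)
  finally have eq: "GG s N r d = sum Fp (PP s k - {A, B})" by simp
  show ?thesis
    by (rule exI[of _ A], rule exI[of _ B]) (use AP BP AB eq in \<open>simp add: Fp_def\<close>)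
qed

lemma card_PP: "card (PP s k) = 2^(k * (s + 1))"
proof -
  have "card {0..<(2::int)^k} = 2^k" by (simp add: nat_power_eq)
  moreover have "card {f. set f \<subseteq> {0..<(2::int)^k} \<and> length f = s} = (2^k)^s"
    using card_lists_length_eq[of "{0..<(2::int)^k}" s] \<open>card {0..<(2::int)^k} = 2^k\<close> by (simp add: nat_power_eq)
  ultimately show ?thesis unfolding PP_def card_cartesian_product
    by (simp add: power_mult[symmetric] power_add[symmetric] algebra_simps nat_power_eq)
qed

lemma main_bound:
  assumes s: "s \<ge> 1" and m: "int s + 1 < 2^m" and y: "(dlt ^^ s) thue_morse y = -1"
    and kp: "y + s < 2^k'" and k: "k = m + k' + 1"
    and T: "T = (2::nat)^(k * (s + 1))" and al: "\<alpha> = log 2 (real T - 2) / real k"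
  shows "\<forall>r d. (\<forall>\<omega>\<in>cube_vertices s. 0 \<le> r \<omega> \<and> r \<omega> \<le> int s + 1 \<and> 0 \<le> d \<omega> \<and> d \<omega> \<le> 1) \<longrightarrow>
     \<bar>GG s N r d\<bar> \<le> real T * (max 1 (real N)) powr \<alpha>"
proof (induction N rule: less_induct)
  case (less N)
  have kpos: "k \<ge> 1" using k by simp
  have T4: "T \<ge> 4"
  proof -
    have "1 * 2 \<le> k * (s + 1)" using kpos s by (intro mult_le_mono) auto
    then have "k * (s + 1) \<ge> 2" by simp
    then have "(2::nat)^2 \<le> 2^(k * (s+1))" by (intro power_increasing) auto
    then show ?thesis unfolding T by simp
  qed
  define Lk where "Lk = real T - 2"
  have Lk: "Lk \<ge> 2" using T4 unfolding Lk_def by simp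
  have al0: "\<alpha> \<ge> 0" unfolding al using Lk kpos unfolding Lk_def by simp
  have Lkal: "Lk = real (2^k) powr \<alpha>"
  proof -
    have "real (2^k) powr \<alpha> = (2 powr real k) powr \<alpha>" by (simp add: powr_realpow)
    also have "\<dots> = 2 powr (real k * \<alpha>)" by (simp add: powr_powr)
    also have "real k * \<alpha> = log 2 Lk" unfolding al Lk_def using kpos by simp
    also have "2 powr log 2 Lk = Lk" using Lk by simp
    finally show ?thesis by simp
  qed
  show ?case
  proof (intro allI impI)
    fix r d :: "bool list \<Rightarrow> int"
    assume b: "\<forall>\<omega>\<in>cube_vertices s. 0 \<le> r \<omega> \<and> r \<omega> \<le> int s + 1 \<and> 0 \<le> d \<omega> \<and> d \<omega> \<le> 1"
    have ex: "\<exists>A B. A \<in> PP s k \<and> B \<in> PP s k \<and> A \<noteq> B \<and>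
      GG s N r d = (\<Sum>p\<in>PP s k - {A, B}. sig s k (fst p) (snd p) r *
        GG s (N div 2^k) (qq k (fst p) (snd p) r) (dd k N d (fst p) (snd p) r))"
      by (rule cancel[OF s m y kp _ _ k]) (use b in auto)
    then obtain A B where AB': "A \<in> PP s k \<and> B \<in> PP s k \<and> A \<noteq> B \<and>
      GG s N r d = (\<Sum>p\<in>PP s k - {A, B}. sig s k (fst p) (snd p) r *
        GG s (N div 2^k) (qq k (fst p) (snd p) r) (dd k N d (fst p) (snd p) r))"
      by (elim exE)
    have AB: "A \<in> PP s k" "B \<in> PP s k" "A \<noteq> B" using AB' by auto
    have eq: "GG s N r d = (\<Sum>p\<in>PP s k - {A, B}. sig s k (fst p) (snd p) r *
        GG s (N div 2^k) (qq k (fst p) (snd p) r) (dd k N d (fst p) (snd p) r))" using AB' by blast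
    define N' where "N' = N div 2^k"
    define G' where "G' p = GG s N' (qq k (fst p) (snd p) r) (dd k N d (fst p) (snd p) r)" for p
    have cardD: "card (PP s k - {A, B}) = T - 2"
      using AB card_PP[of s k] finite_PP[of s k] unfolding T by (simp add: card_Diff_subset)
    have sig1: "\<bar>sig s k e f r\<bar> = 1" for e f by (simp add: sig_def abs_prod)
    have "\<bar>GG s N r d\<bar> \<le> (\<Sum>p\<in>PP s k - {A, B}. \<bar>sig s k (fst p) (snd p) r * G' p\<bar>)"
      unfolding eq G'_def N'_def by (rule sum_abs)
    also have "\<dots> = (\<Sum>p\<in>PP s k - {A, B}. \<bar>G' p\<bar>)" by (simp add: abs_mult sig1)
    finally have S: "\<bar>GG s N r d\<bar> \<le> (\<Sum>p\<in>PP s k - {A, B}. \<bar>G' p\<bar>)" .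
    have bp: "\<forall>\<omega>\<in>cube_vertices s. 0 \<le> qq k (fst p) (snd p) r \<omega> \<and> qq k (fst p) (snd p) r \<omega> \<le> int s + 1
       \<and> 0 \<le> dd k N d (fst p) (snd p) r \<omega> \<and> dd k N d (fst p) (snd p) r \<omega> \<le> 1" if p: "p \<in> PP s k" for p
    proof
      fix \<omega> assume w: "\<omega> \<in> cube_vertices s"
      have pp: "(fst p, snd p) \<in> PP s k" using p by simp
      show "0 \<le> qq k (fst p) (snd p) r \<omega> \<and> qq k (fst p) (snd p) r \<omega> \<le> int s + 1
       \<and> 0 \<le> dd k N d (fst p) (snd p) r \<omega> \<and> dd k N d (fst p) (snd p) r \<omega> \<le> 1"
        using qq_bounds[OF pp w] dd_bounds[of d \<omega> k N "fst p" "snd p" r] b w by auto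
    qed
    have mx: "1 \<le> (max 1 (real N)) powr \<alpha>" using al0 by (intro ge_one_powr_ge_zero) auto
    show "\<bar>GG s N r d\<bar> \<le> real T * (max 1 (real N)) powr \<alpha>"
    proof (cases "N' = 0")
      case True
      have "(\<Sum>p\<in>PP s k - {A, B}. \<bar>G' p\<bar>) \<le> (\<Sum>p\<in>PP s k - {A, B}. 1)"
      proof (rule sum_mono)
        fix p assume "p \<in> PP s k - {A, B}"
        then show "\<bar>G' p\<bar> \<le> 1" unfolding G'_def True using GG_zero bp[of p] by auto
      qed
      also have "\<dots> = real T - 2" using cardD T4 by simp
      also have "\<dots> \<le> real T * 1" by simp
      also have "\<dots> \<le> real T * (max 1 (real N)) powr \<alpha>" using mx by (intro mult_left_mono) auto
      finally show ?thesis using S by linarith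
    next
      case False
      have "N \<noteq> 0" using False unfolding N'_def by (cases N) auto
      moreover have "1 < (2::nat)^k" using kpos by (intro one_less_power) auto
      ultimately have N'N: "N' < N" unfolding N'_def using div_less_dividend by auto
      have IH: "\<bar>G' p\<bar> \<le> real T * real N' powr \<alpha>" if p: "p \<in> PP s k" for p
        using less.IH[OF N'N] bp[OF p] False unfolding G'_def by auto
      have "(\<Sum>p\<in>PP s k - {A, B}. \<bar>G' p\<bar>) \<le> (\<Sum>p\<in>PP s k - {A, B}. real T * real N' powr \<alpha>)"
        by (rule sum_mono) (use IH in auto)
      also have "\<dots> = Lk * (real T * real N' powr \<alpha>)" using cardD T4 unfolding Lk_def by simp
      also have "\<dots> = real T * (real (2^k) * real N') powr \<alpha>"
        unfolding Lkal by (simp add: powr_mult)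
      also have "\<dots> \<le> real T * (max 1 (real N)) powr \<alpha>"
      proof -
        have "2^k * N' \<le> N" unfolding N'_def by simp
        then have "real (2^k) * real N' \<le> max 1 (real N)" by (metis max.coboundedI2 of_nat_le_iff of_nat_mult)
        then show ?thesis using al0 by (intro mult_left_mono powr_mono2) auto
      qed
      finally show ?thesis using S by linarith
    qed
  qed
qed

lemma supp_zero: "supp s N (\<lambda>_. 0) (\<lambda>_. 0) = gowers_cubes s N"
  unfolding supp_def gowers_cubes_def by simp

lemma power_eq: "gowers_power s N thue_morse = GG s N (\<lambda>_. 0) (\<lambda>_. 0) / real (card (gowers_cubes s N))"
  unfolding gowers_power_def GG_def supp_zero by simp

lemma card_cubes_lower:
  assumes N: "N \<ge> 2 * (s + 1)"
  shows "(real N / (2 * (real s + 1))) ^ (s + 1) \<le> real (card (gowers_cubes s N))"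
proof -
  define M where "M = N div (s + 1)"
  define box where "box = {0..<int M} \<times> {hs. set hs \<subseteq> {0..<int M} \<and> length hs = s}"
  have sub: "box \<subseteq> gowers_cubes s N"
  proof
    fix x assume "x \<in> box"
    then obtain n hs where x: "x = (n, hs)" and n: "0 \<le> n" "n < int M" and hs: "set hs \<subseteq> {0..<int M}" "length hs = s"
      unfolding box_def by auto
    have hb: "\<forall>z\<in>set hs. 0 \<le> z \<and> z \<le> int M - 1" using hs by auto
    have "(s + 1) * M \<le> N" unfolding M_def by (rule times_div_less_eq_dividend)
    then have "int ((s + 1) * M) \<le> int N" by (simp only: of_nat_le_iff)
    then have sM: "(int s + 1) * int M \<le> int N" by (simp add: algebra_simps)
    have "0 \<le> n + cube_dot \<omega> hs \<and> n + cube_dot \<omega> hs < int N" for \<omega>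
    proof -
      have cb: "0 \<le> cube_dot \<omega> hs" "cube_dot \<omega> hs \<le> int s * (int M - 1)" using cube_dot_bounds[OF hb] hs by auto
      have "n + cube_dot \<omega> hs \<le> (int M - 1) + int s * (int M - 1)" using n cb by simp
      also have "\<dots> = (int s + 1) * int M - (int s + 1)" by (simp add: algebra_simps)
      finally show ?thesis using cb n sM by simp
    qed
    then show "x \<in> gowers_cubes s N" unfolding x gowers_cubes_def using hs by auto
  qed
  have fin: "finite (gowers_cubes s N)" using finite_supp[of s N "\<lambda>_. 0" "\<lambda>_. 0"] supp_zero by simp
  have cbox: "card box = M ^ (s + 1)"
    unfolding box_def card_cartesian_product using card_lists_length_eq[of "{0..<int M}" s] by simp
  have cle: "M ^ (s + 1) \<le> card (gowers_cubes s N)" using card_mono[OF fin sub] cbox by simp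
  have Mlow: "real N / (2 * (real s + 1)) \<le> real M"
  proof -
    have "N = (s + 1) * M + N mod (s + 1)" unfolding M_def by (rule mult_div_mod_eq[symmetric])
    then have "real N = real ((s + 1) * M + N mod (s + 1))" by (rule arg_cong)
    then have e: "real N = (real s + 1) * real M + real (N mod (s + 1))" by (simp add: algebra_simps)
    have "N mod (s + 1) < s + 1" by simp
    then have "real (N mod (s + 1)) \<le> real s + 1" by linarith
    moreover have "real (2 * (s + 1)) \<le> real N" using N by (simp only: of_nat_le_iff)
    then have "2 * (real s + 1) \<le> real N" by simp
    ultimately have "real N \<le> 2 * ((real s + 1) * real M)" using e
      by (smt (verit))
    then show ?thesis by (simp add: field_simps)
  qed
  have "(real N / (2 * (real s + 1))) ^ (s + 1) \<le> real M ^ (s + 1)"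
    by (rule power_mono[OF Mlow]) simp
  also have "\<dots> \<le> real (card (gowers_cubes s N))"
  proof -
    have "real (M ^ (s + 1)) \<le> real (card (gowers_cubes s N))" using cle by (simp only: of_nat_le_iff)
    then show ?thesis by simp
  qed
  finally show ?thesis .
qed

theorem theoremA:
  fixes s :: nat
  assumes "s \<ge> 1"
  shows "\<exists>c>0. (\<lambda>N. gowers_norm s N thue_morse) \<in> O(\<lambda>N. real N powr (- c))"
proof -
  have s: "s \<ge> 1" by (rule assms)
  obtain y where y: "(dlt ^^ s) thue_morse y = -1" using dlt_tm_exists by blast
  define m where "m = s + 1"
  define k' where "k' = y + s + 1"
  define k where "k = m + k' + 1"
  define T :: nat where "T = 2^(k * (s + 1))"
  define \<alpha> where "\<alpha> = log 2 (real T - 2) / real k"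
  have m: "int s + 1 < 2^m"
  proof -
    have "s + 1 < 2^(s+1)" by (rule less_exp)
    then have "int (s + 1) < int (2^(s+1))" by (simp only: of_nat_less_iff)
    then show ?thesis unfolding m_def by simp
  qed
  have kp: "y + s < 2^k'" unfolding k'_def using less_exp[of "y + s + 1"] by simp
  have kpos: "k \<ge> 1" unfolding k_def by simp
  have T4: "T \<ge> 4"
  proof -
    have "1 * 2 \<le> k * (s + 1)" using kpos s by (intro mult_le_mono) auto
    then have "(2::nat)^2 \<le> 2^(k * (s+1))" by (intro power_increasing) auto
    then show ?thesis unfolding T_def by simp
  qed
  have al_lt: "\<alpha> < real s + 1"
  proof -
    have "log 2 (real T - 2) < log 2 (real T)" using T4 by simp
    also have "log 2 (real T) = real k * (real s + 1)"
      unfolding T_def by (simp add: log_nat_power algebra_simps)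
    finally show ?thesis unfolding \<alpha>_def using kpos by (simp add: divide_simps mult.commute)
  qed
  have bnd: "\<bar>GG s N (\<lambda>_. 0) (\<lambda>_. 0)\<bar> \<le> real T * (max 1 (real N)) powr \<alpha>" for N
    using main_bound[OF s m y kp k_def T_def \<alpha>_def, of N] by auto
  define c where "c = (real s + 1 - \<alpha>) / 2^s"
  have c: "c > 0" unfolding c_def using al_lt by simp
  define B0 where "B0 = real T * (2 * (real s + 1)) ^ (s + 1)"
  have B0: "B0 > 0" unfolding B0_def using T4 by simp
  have ev: "\<forall>N\<ge>2 * (s + 1). \<bar>gowers_norm s N thue_morse\<bar> \<le> B0 powr (1 / 2^s) * real N powr (- c)"
  proof (intro allI impI)
    fix N :: nat assume N: "N \<ge> 2 * (s + 1)"
    have Npos: "real N > 0" using N by simp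
    have N1: "max 1 (real N) = real N" using N by simp
    define Q where "Q = (real N / (2 * (real s + 1))) ^ (s + 1)"
    have Qpos: "Q > 0" unfolding Q_def using Npos by simp
    have Qc: "Q \<le> real (card (gowers_cubes s N))" unfolding Q_def by (rule card_cubes_lower[OF N])
    have Qe: "Q = real N powr (real s + 1) / (2 * (real s + 1)) ^ (s + 1)"
    proof -
      have "real N powr (real s + 1) = real N ^ (s + 1)" using powr_realpow[OF Npos, of "s + 1"] by (simp add: add.commute)
      then show ?thesis unfolding Q_def by (simp add: power_divide)
    qed
    have P: "\<bar>gowers_power s N thue_morse\<bar> \<le> B0 * real N powr (\<alpha> - (real s + 1))"
    proof -
      have "\<bar>gowers_power s N thue_morse\<bar> = \<bar>GG s N (\<lambda>_. 0) (\<lambda>_. 0)\<bar> / real (card (gowers_cubes s N))"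
        unfolding power_eq by simp
      also have "\<dots> \<le> \<bar>GG s N (\<lambda>_. 0) (\<lambda>_. 0)\<bar> / Q"
        using Qpos Qc by (intro divide_left_mono) auto
      also have "\<dots> \<le> real T * real N powr \<alpha> / Q"
        using bnd[of N] N1 Qpos by (intro divide_right_mono) auto
      also have "\<dots> = B0 * (real N powr \<alpha> / real N powr (real s + 1))"
        unfolding Qe B0_def using Npos by (simp add: field_simps)
      also have "\<dots> = B0 * real N powr (\<alpha> - (real s + 1))" by (simp add: powr_diff)
      finally show ?thesis .
    qed
    have "\<bar>gowers_norm s N thue_morse\<bar> = root (2^s) \<bar>gowers_power s N thue_morse\<bar>"
      unfolding gowers_norm_def by (simp add: real_root_abs)
    also have "\<dots> \<le> root (2^s) (B0 * real N powr (\<alpha> - (real s + 1)))"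
      using P by (simp)
    also have "\<dots> = (B0 * real N powr (\<alpha> - (real s + 1))) powr (1 / 2^s)"
      using B0 Npos by (subst root_powr_inverse) auto
    also have "\<dots> = B0 powr (1 / 2^s) * real N powr (- c)"
    proof -
      have ex: "(\<alpha> - (real s + 1)) / 2^s = - c" unfolding c_def by (simp add: minus_divide_left)
      show ?thesis using B0 Npos by (simp add: powr_mult powr_powr ex del: of_nat_add)
    qed
    finally show "\<bar>gowers_norm s N thue_morse\<bar> \<le> B0 powr (1 / 2^s) * real N powr (- c)" .
  qed
  have "(\<lambda>N. gowers_norm s N thue_morse) \<in> O(\<lambda>N. real N powr (- c))"
  proof (rule bigoI[where c="B0 powr (1 / 2^s)"])
    show "\<forall>\<^sub>F N in at_top. norm (gowers_norm s N thue_morse) \<le> B0 powr (1 / 2^s) * norm (real N powr (- c))"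
      unfolding eventually_at_top_linorder using ev by auto
  qed
  then show ?thesis using c by blast
qed

end
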